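(* Let $G$ be a connected signed digraph. There exists a nilpotent degree-bounded finite dynamical system on $G$ if and only if $G$ is not a signed cycle.
   Context: A finite dynamical system (FDS) with $n$ components is a map $f=(f_1,\dots,f_n):X\to X$ where $X=X_1\times\cdots\times X_n$ and each $X_i$ is a nonempty finite interval of integers; $f^k$ denotes the $k$-fold composition. $f$ is nilpotent if $f^k$ is a constant map for some positive integer $k$. A signed digraph is a pair $G=(V,E)$ with $E\subseteq V\times V\times\{+,-\}$; $(j,i,s)\in E$ is an arc from $j$ to $i$ of sign $s$ (loops allowed; $G$ may have both a positive and a negative arc from $j$ to $i$, called parallel arcs). Write $G^+_i=\{j:(j,i,+)\in E\}$, $G^-_i=\{j:(j,i,-)\in E\}$, $G_i=G^+_i\cup G^-_i$. The in-degree is $d^{\mathrm{in}}_G(i)=|G^+_i|+|G^-_i|$ and the out-degree $d^{\mathrm{out}}_G(i)$ is the number of positive arcs leaving $i$ plus the number of negative arcs leaving $i$. $G$ is connected if its underlying undirected graph is connected. The underlying unsigned digraph $|G|$ has vertex set $V$ and an arc from $j$ to $i$ iff $j\in G_i$. $G$ is a signed cycle if $|G|$ is a directed cycle (through all vertices, each exactly once; a single vertex with a loop counts) and $G$ has no parallel arcs. The interaction graph of an FDS $f$ is the signed digraph on $\{1,\dots,n\}$ with a positive (resp. negative) arc from $j$ to $i$ iff there is $x\in X$ with $x_j<\max(X_j)$ such that $f_i(x+e_j)-f_i(x)$ is positive (resp. negative), $e_j$ the $j$-th unit vector. $f$ is an FDS on $G$ if $G$ is its interaction graph. $f$ is degree-bounded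 if, with $G$ its interaction graph, for every $i$: $|X_i|=2$ if $d^{\mathrm{out}}_G(i)=0<d^{\mathrm{in}}_G(i)$, and $|X_i|\le d^{\mathrm{out}}_G(i)+1$ otherwise. *)

theory Defs
  imports Main
begin

datatype sign = Pos | Neg

text \<open>A signed digraph on the vertex set {0..<n} is given by its arc set
  E :: (nat \<times> nat \<times> sign) set; (j,i,s) \<in> E is an arc from j to i of sign s.\<close>

definition signed_digraph :: "nat \<Rightarrow> (nat \<times> nat \<times> sign) set \<Rightarrow> bool" where
  "signed_digraph n E \<longleftrightarrow> (\<forall>(j,i,s)\<in>E. j < n \<and> i < n)"

definition in_pos :: "(nat \<times> nat \<times> sign) set \<Rightarrow> nat \<Rightarrow> nat set" where
  "in_pos E i = {j. (j,i,Pos) \<in> E}"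

definition in_neg :: "(nat \<times> nat \<times> sign) set \<Rightarrow> nat \<Rightarrow> nat set" where
  "in_neg E i = {j. (j,i,Neg) \<in> E}"

definition in_degree :: "(nat \<times> nat \<times> sign) set \<Rightarrow> nat \<Rightarrow> nat" where
  "in_degree E i = card (in_pos E i) + card (in_neg E i)"

definition out_degree :: "(nat \<times> nat \<times> sign) set \<Rightarrow> nat \<Rightarrow> nat" where
  "out_degree E j = card {i. (j,i,Pos) \<in> E} + card {i. (j,i,Neg) \<in> E}"

definition arcs :: "(nat \<times> nat \<times> sign) set \<Rightarrow> (nat \<times> nat) set" where
  "arcs E = {(j,i). \<exists>s. (j,i,s) \<in> E}"

definition connected_sd :: "nat \<Rightarrow> (nat \<times> nat \<times> sign) set \<Rightarrow> bool" where
  "connected_sd n E \<longleftrightarrow> (\<forall>u<n. \<forall>v<n. (u,v) \<in> (arcs E \<union> (arcs E)\<inverse>)\<^sup>*)"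

definition signed_cycle :: "nat \<Rightarrow> (nat \<times> nat \<times> sign) set \<Rightarrow> bool" where
  "signed_cycle n E \<longleftrightarrow>
     (\<exists>p. bij_betw p {..<n} {..<n} \<and>
          arcs E = {(p k, p (Suc k mod n)) | k. k < n}) \<and>
     \<not> (\<exists>j i. (j,i,Pos) \<in> E \<and> (j,i,Neg) \<in> E)"

definition states :: "nat \<Rightarrow> (nat \<Rightarrow> int) \<Rightarrow> (nat \<Rightarrow> int) \<Rightarrow> (nat \<Rightarrow> int) set" where
  "states n lo hi = {x. (\<forall>i<n. lo i \<le> x i \<and> x i \<le> hi i) \<and> (\<forall>i\<ge>n. x i = 0)}"

definition is_FDS :: "nat \<Rightarrow> (nat \<Rightarrow> int) \<Rightarrow> (nat \<Rightarrow> int) \<Rightarrow> ((nat \<Rightarrow> int) \<Rightarrow> (nat \<Rightarrow> int)) \<Rightarrow> bool" where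
  "is_FDS n lo hi f \<longleftrightarrow> (\<forall>i<n. lo i \<le> hi i) \<and> (\<forall>x\<in>states n lo hi. f x \<in> states n lo hi)"

definition sign_of :: "int \<Rightarrow> sign option" where
  "sign_of d = (if d > 0 then Some Pos else if d < 0 then Some Neg else None)"

definition interaction_graph :: "nat \<Rightarrow> (nat \<Rightarrow> int) \<Rightarrow> (nat \<Rightarrow> int) \<Rightarrow> ((nat \<Rightarrow> int) \<Rightarrow> (nat \<Rightarrow> int)) \<Rightarrow> (nat \<times> nat \<times> sign) set" where
  "interaction_graph n lo hi f =
     {(j,i,s). j < n \<and> i < n \<and>
        (\<exists>x\<in>states n lo hi. x j < hi j \<and> sign_of (f (x(j := x j + 1)) i - f x i) = Some s)}"

definition nilpotent :: "nat \<Rightarrow> (nat \<Rightarrow> int) \<Rightarrow> (nat \<Rightarrow> int) \<Rightarrow> ((nat \<Rightarrow> int) \<Rightarrow> (nat \<Rightarrow> int)) \<Rightarrow> bool" where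
  "nilpotent n lo hi f \<longleftrightarrow> (\<exists>k>0. \<exists>c. \<forall>x\<in>states n lo hi. (f ^^ k) x = c)"

definition degree_bounded :: "nat \<Rightarrow> (nat \<Rightarrow> int) \<Rightarrow> (nat \<Rightarrow> int) \<Rightarrow> ((nat \<Rightarrow> int) \<Rightarrow> (nat \<Rightarrow> int)) \<Rightarrow> bool" where
  "degree_bounded n lo hi f \<longleftrightarrow>
     (let G = interaction_graph n lo hi f in
      \<forall>i<n. (if out_degree G i = 0 \<and> 0 < in_degree G i
             then card {lo i..hi i} = 2
             else card {lo i..hi i} \<le> out_degree G i + 1))"

end

theory Submission
  imports Defs
begin


definition pairE :: "(nat \<times> nat \<times> sign) set \<Rightarrow> nat \<Rightarrow> nat \<Rightarrow> bool" where
  "pairE E u v \<longleftrightarrow> (u,v,Pos) \<in> E \<and> (u,v,Neg) \<in> E"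

definition root :: "(nat \<times> nat \<times> sign) set \<Rightarrow> (nat \<Rightarrow> nat) \<Rightarrow> nat \<Rightarrow> bool" where
  "root E lam v \<longleftrightarrow> (\<forall>u s. (u,v,s) \<notin> E) \<or> (\<exists>u. pairE E u v) \<or> (\<exists>u s. (u,v,s) \<in> E \<and> lam u \<noteq> v)"

primrec Rset :: "nat \<Rightarrow> (nat \<times> nat \<times> sign) set \<Rightarrow> (nat \<Rightarrow> nat) \<Rightarrow> nat \<Rightarrow> nat set" where
  "Rset n E lam 0 = {v. v < n \<and> root E lam v}"
| "Rset n E lam (Suc k) = Rset n E lam k \<union> {v. \<exists>u \<in> Rset n E lam k. (u,v) \<in> arcs E}"

definition reach :: "nat \<Rightarrow> (nat \<times> nat \<times> sign) set \<Rightarrow> (nat \<Rightarrow> nat) \<Rightarrow> nat \<Rightarrow> bool" where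
  "reach n E lam v \<longleftrightarrow> (\<exists>k. v \<in> Rset n E lam k)"

definition validlam :: "nat \<Rightarrow> (nat \<times> nat \<times> sign) set \<Rightarrow> (nat \<Rightarrow> nat) \<Rightarrow> bool" where
  "validlam n E lam \<longleftrightarrow> (\<forall>u<n. (\<exists>v s. (u,v,s) \<in> E) \<longrightarrow> (\<exists>s. (u, lam u, s) \<in> E))"

definition Uset :: "nat \<Rightarrow> (nat \<times> nat \<times> sign) set \<Rightarrow> (nat \<Rightarrow> nat) \<Rightarrow> nat set" where
  "Uset n E lam = {v. v < n \<and> \<not> reach n E lam v}"

lemma arcs_iff: "(j, w) \<in> arcs E \<longleftrightarrow> (\<exists>s. (j,w,s) \<in> E)" by (simp add: arcs_def)

lemma reach_arc: "reach n E lam u \<Longrightarrow> (u,v) \<in> arcs E \<Longrightarrow> reach n E lam v"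
  unfolding reach_def by (metis (mono_tags, lifting) Rset.simps(2) UnI2 mem_Collect_eq)

lemma reach_rtr: "(u,v) \<in> (arcs E)\<^sup>* \<Longrightarrow> reach n E lam u \<Longrightarrow> reach n E lam v"
  by (induction rule: rtrancl_induct) (auto intro: reach_arc)

lemma root_reach: "v < n \<Longrightarrow> root E lam v \<Longrightarrow> reach n E lam v"
  unfolding reach_def by (metis (mono_tags, lifting) Rset.simps(1) mem_Collect_eq)

lemma sd_lt: "signed_digraph n E \<Longrightarrow> (u,v,s) \<in> E \<Longrightarrow> u < n \<and> v < n"
  unfolding signed_digraph_def by blast

lemma U_in:
  assumes sd: "signed_digraph n E" and v: "v \<in> Uset n E lam" and a: "(u,v,s) \<in> E"
  shows "u \<in> Uset n E lam \<and> lam u = v"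
proof -
  have "\<not> root E lam v" using v root_reach unfolding Uset_def by blast
  then have "lam u = v" using a unfolding root_def by blast
  moreover have "\<not> reach n E lam u" using v reach_arc[of n E lam u v] a arcs_iff unfolding Uset_def by blast
  ultimately show ?thesis using sd_lt[OF sd a] unfolding Uset_def by blast
qed

lemma U_nopair:
  assumes "v \<in> Uset n E lam" shows "\<not> pairE E u v"
  using assms root_reach unfolding Uset_def root_def by blast

lemma U_pred:
  assumes sd: "signed_digraph n E" and v: "v \<in> Uset n E lam"
  shows "\<exists>u. u \<in> Uset n E lam \<and> (u,v) \<in> arcs E \<and> lam u = v"
proof -
  have "\<not> root E lam v" using v root_reach unfolding Uset_def by blast
  then obtain u s where "(u,v,s) \<in> E" unfolding root_def by blast
  then show ?thesis using U_in[OF sd v] arcs_iff by blast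
qed

lemma U_cycle:
  assumes sd: "signed_digraph n E" and v: "v \<in> Uset n E lam"
  shows "\<exists>p>0. (lam ^^ p) v = v \<and> (\<forall>k. (lam ^^ k) v \<in> Uset n E lam \<and>
           ((lam ^^ k) v, (lam ^^ Suc k) v) \<in> arcs E)"
proof -
  let ?U = "Uset n E lam"
  define pr where "pr w = (SOME u. u \<in> ?U \<and> (u,w) \<in> arcs E \<and> lam u = w)" for w
  have prp: "pr w \<in> ?U \<and> (pr w, w) \<in> arcs E \<and> lam (pr w) = w" if "w \<in> ?U" for w
    unfolding pr_def using someI_ex[OF U_pred[OF sd that]] .
  define s where "s k = (pr ^^ k) v" for k
  have sS: "s (Suc k) = pr (s k)" for k by (simp add: s_def)
  have sU: "s k \<in> ?U" for k by (induction k) (auto simp: s_def v prp)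
  have sarc: "(s (Suc k), s k) \<in> arcs E \<and> lam (s (Suc k)) = s k" for k using prp[OF sU[of k]] sS by simp
  have bk: "(lam ^^ m) (s (k + m)) = s k" for m k
  proof (induction m)
    case 0 then show ?case by simp
  next
    case (Suc m)
    have "(lam ^^ Suc m) (s (k + Suc m)) = (lam ^^ m) (lam (s (Suc (k + m))))"
      by (simp only: funpow_Suc_right comp_def add_Suc_right)
    also have "\<dots> = (lam ^^ m) (s (k + m))" using sarc[of "k + m"] by simp
    finally show ?case using Suc by simp
  qed
  have fin: "finite ?U" unfolding Uset_def by auto
  have "range s \<subseteq> ?U" using sU by auto
  then have "\<not> inj s" using fin by (meson finite_subset infinite_UNIV_nat finite_imageD)
  then obtain i j where ij: "i < j" "s i = s j" unfolding inj_def by (metis linorder_neqE_nat)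
  define p where "p = j - i"
  have p0: "p > 0" using ij by (simp add: p_def)
  have shift: "s (a + d) = s (b + d)" if "s a = s b" for a b d
    using that by (induction d) (auto simp: sS)
  have vp: "s p = s 0"
  proof -
    have "s 0 = (lam ^^ i) (s (0 + i))" using bk by metis
    also have "\<dots> = (lam ^^ i) (s (p + i))" using ij by (simp add: p_def)
    also have "\<dots> = s p" using bk by metis
    finally show ?thesis by simp
  qed
  have per: "s (d + p) = s d" for d using shift[OF vp, of d] by (simp add: add.commute)
  have lp: "(lam ^^ p) v = v" using bk[of p 0] vp by (simp add: s_def)
  have ex: "\<exists>m. (lam ^^ k) v = s (Suc m)" for k
  proof (induction k)
    case 0 then show ?case using vp p0 by (metis Suc_pred funpow_0 s_def)
  next
    case (Suc k)
    then obtain m where m: "(lam ^^ k) v = s (Suc m)" by blast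
    have "(lam ^^ Suc k) v = s m" using m sarc by simp
    also have "\<dots> = s (Suc (m + p - 1))" using per[of m] p0 by simp
    finally show ?case by blast
  qed
  have "\<forall>k. (lam ^^ k) v \<in> ?U \<and> ((lam ^^ k) v, (lam ^^ Suc k) v) \<in> arcs E"
  proof
    fix k
    obtain m where m: "(lam ^^ k) v = s (Suc m)" using ex by blast
    show "(lam ^^ k) v \<in> ?U \<and> ((lam ^^ k) v, (lam ^^ Suc k) v) \<in> arcs E"
      using m sU sarc[of m] by simp
  qed
  then show ?thesis using p0 lp by blast
qed

lemma funpow_rtr:
  assumes "\<forall>k. ((lam ^^ k) v, (lam ^^ Suc k) v) \<in> R"
  shows "a \<le> b \<Longrightarrow> ((lam ^^ a) v, (lam ^^ b) v) \<in> R\<^sup>*"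
proof (induction b)
  case 0 then show ?case by simp
next
  case (Suc b)
  then show ?case
  proof (cases "a = Suc b")
    case False
    then have "((lam ^^ a) v, (lam ^^ b) v) \<in> R\<^sup>*" using Suc by simp
    then show ?thesis using assms by (meson rtrancl.rtrancl_into_rtrancl)
  qed simp
qed




lemma switch_reach:
  assumes sd: "signed_digraph n E" and val: "validlam n E lam"
  and uU: "u \<in> Uset n E lam" and ux: "(u,x) \<in> arcs E" and xne: "x \<noteq> lam u"
  shows "Uset n E (lam(u := x)) \<subset> Uset n E lam"
proof -
  let ?l = "lam(u := x)"
  obtain p where p: "p>0" "(lam^^p) u = u"
    and cyc: "\<forall>k. (lam ^^ k) u \<in> Uset n E lam \<and> ((lam ^^ k) u, (lam ^^ Suc k) u) \<in> arcs E"
    using U_cycle[OF sd uU] by blast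
  have un: "u < n" using uU unfolding Uset_def by simp
  have "(lam ^^ Suc 0) u \<in> Uset n E lam" using spec[OF cyc, of "Suc 0"] by (rule conjunct1)
  then have lu_U: "lam u \<in> Uset n E lam" by simp
  obtain sx where sx: "(u,x,sx) \<in> E" using ux arcs_iff by blast
  have "\<exists>v s. (u,v,s) \<in> E" using sx by blast
  from val[unfolded validlam_def, rule_format, OF un this]
  obtain s0 where s0: "(u, lam u, s0) \<in> E" by blast
  have root_lu: "root E ?l (lam u)" unfolding root_def using s0 xne by auto
  have lun: "lam u < n" using sd_lt[OF sd s0] by simp
  have reach_lu: "reach n E ?l (lam u)" using root_reach[OF lun root_lu] .
  have path0: "((lam ^^ 1) u, (lam ^^ p) u) \<in> (arcs E)\<^sup>*" using funpow_rtr[of lam u "arcs E" 1 p] cyc p by simp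
  then have path: "(lam u, u) \<in> (arcs E)\<^sup>*" using p by simp
  have reach_x: "reach n E ?l x" using reach_arc[OF reach_rtr[OF path reach_lu] ux] .
  have mono: "reach n E ?l w" if "w \<in> Rset n E lam k" for w k
    using that
  proof (induction k arbitrary: w)
    case 0
    then have wn: "w < n" and r: "root E lam w" by auto
    show ?case
    proof (cases "root E ?l w")
      case True then show ?thesis using root_reach wn by blast
    next
      case False
      then obtain w' s where "(w',w,s)\<in>E" "lam w' \<noteq> w" "?l w' = w" using r unfolding root_def by auto
      then have wx: "w = x" by (auto split: if_splits)
      show ?thesis unfolding wx by (rule reach_x)
    qed
  next
    case (Suc k)
    from Suc.prems have "w \<in> Rset n E lam k \<or> (\<exists>u'\<in>Rset n E lam k. (u',w) \<in> arcs E)" by simp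
    then show ?case
    proof
      assume "w \<in> Rset n E lam k" then show ?case by (rule Suc.IH)
    next
      assume "\<exists>u'\<in>Rset n E lam k. (u',w) \<in> arcs E"
      then obtain u' where u': "u' \<in> Rset n E lam k" "(u',w) \<in> arcs E" by blast
      show ?case by (rule reach_arc[OF Suc.IH[OF u'(1)] u'(2)])
    qed
  qed
  have sub: "Uset n E ?l \<subseteq> Uset n E lam" using mono unfolding Uset_def reach_def by blast
  have "lam u \<notin> Uset n E ?l" using reach_lu unfolding Uset_def by blast
  then show ?thesis using sub lu_U by blast
qed

lemma funpow_per:
  assumes "(f ^^ q) u = u" shows "(f ^^ (b + m * q)) u = (f ^^ b) u"
proof (induction m)
  case 0 then show ?case by simp
next
  case (Suc m)
  have e: "b + Suc m * q = (b + m * q) + q" by simp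
  have "(f ^^ (b + Suc m * q)) u = (f ^^ (b + m * q)) ((f ^^ q) u)"
    by (simp only: e funpow_add o_apply)
  then show ?case using Suc assms by simp
qed

lemma funpow_mod:
  assumes "(f ^^ q) u = u" shows "(f ^^ k) u = (f ^^ (k mod q)) u"
  using funpow_per[OF assms, of "k mod q" "k div q"] by simp

lemma closed_cycle:
  assumes n: "0 < n" and sd: "signed_digraph n E" and con: "connected_sd n E"
  and u0: "u0 \<in> Uset n E lam"
  and outU: "\<forall>u\<in>Uset n E lam. \<forall>x. (u,x) \<in> arcs E \<longrightarrow> x = lam u"
  shows "signed_cycle n E"
proof -
  let ?U = "Uset n E lam"
  obtain p0 where p0: "p0 > 0" "(lam^^p0) u0 = u0"
    and cyc0: "\<forall>k. (lam ^^ k) u0 \<in> ?U \<and> ((lam ^^ k) u0, (lam ^^ Suc k) u0) \<in> arcs E"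
    using U_cycle[OF sd u0] by blast
  define Q where "Q q \<longleftrightarrow> 0 < q \<and> (lam^^q) u0 = u0" for q
  define q where "q = (LEAST q. Q q)"
  have Qq: "Q q" unfolding q_def using LeastI[of Q p0] p0 Q_def by blast
  then have q: "0 < q" "(lam^^q) u0 = u0" unfolding Q_def by auto
  have qmin: "q \<le> q'" if "0 < q'" "(lam^^q') u0 = u0" for q'
    unfolding q_def using Least_le[of Q q'] that Q_def by blast
  define pp where "pp k = (lam^^k) u0" for k
  have modq: "pp k = pp (k mod q)" for k unfolding pp_def using funpow_mod[OF q(2)] .
  have injq: "i = j" if "i < q" "j < q" "pp i = pp j" for i j
  proof -
    have gen: "False" if ij: "i < j" "j < q" "pp i = pp j" for i j
    proof -
      have "(lam ^^ (q - j + i)) u0 = (lam ^^ (q - j)) (pp i)" by (simp only: pp_def funpow_add o_apply)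
      also have "\<dots> = (lam ^^ (q - j)) (pp j)" using ij by simp
      also have "\<dots> = (lam ^^ (q - j + j)) u0" by (simp only: pp_def funpow_add o_apply)
      also have "\<dots> = (lam ^^ q) u0" using ij by simp
      finally have "(lam ^^ (q - j + i)) u0 = u0" using q by simp
      then have "q \<le> q - j + i" using qmin ij by simp
      then show False using ij by simp
    qed
    show ?thesis using that gen[of i j] gen[of j i] by (metis linorder_neqE_nat)
  qed
  define orb where "orb = range pp"
  have orbU: "orb \<subseteq> ?U" using cyc0 unfolding orb_def pp_def by auto
  have cl_out: "z \<in> orb" if yo: "y \<in> orb" and ya: "(y,z) \<in> arcs E" for y z
  proof -
    obtain k where k: "y = pp k" using yo unfolding orb_def by blast
    have yU: "y \<in> ?U" using yo orbU by blast
    have "z = lam y" using outU yU ya by blast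
    then have "z = pp (Suc k)" using k by (simp add: pp_def)
    then show ?thesis unfolding orb_def by simp
  qed
  have cl_in: "z \<in> orb" if yo: "y \<in> orb" and ya: "(z,y) \<in> arcs E" for y z
  proof -
    obtain k where k: "y = pp k" using yo unfolding orb_def by blast
    obtain s where s: "(z,y,s) \<in> E" using ya arcs_iff by blast
    have yU: "y \<in> ?U" using yo orbU by blast
    have zU: "z \<in> ?U" and lz: "lam z = y" using U_in[OF sd yU s] by auto
    obtain p' where p': "p' > 0" "(lam^^p') z = z" using U_cycle[OF sd zU] by blast
    have "z = (lam^^p') z" using p' by simp
    also have "\<dots> = (lam^^(p' - 1)) (lam z)"
    proof -
      obtain r where r: "p' = Suc r" using p'(1) by (cases p') auto
      show ?thesis unfolding r by (simp only: funpow_Suc_right o_apply diff_Suc_1)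
    qed
    also have "\<dots> = pp (p' - 1 + k)" using lz k by (simp add: pp_def funpow_add)
    finally show ?thesis unfolding orb_def by simp
  qed
  have u0n: "u0 < n" using u0 unfolding Uset_def by simp
  have allv: "v \<in> orb" if "v < n" for v
  proof -
    have "(u0, v) \<in> (arcs E \<union> (arcs E)\<inverse>)\<^sup>*" using con u0n that unfolding connected_sd_def by blast
    then show ?thesis
    proof (induction rule: rtrancl_induct)
      case base then show ?case unfolding orb_def pp_def by (metis funpow_0 rangeI)
    next
      case (step y z) then show ?case using cl_in cl_out by blast
    qed
  qed
  have orb_eq: "orb = pp ` {..<q}"
  proof
    show "orb \<subseteq> pp ` {..<q}" unfolding orb_def using modq q(1) by (metis image_iff image_subsetI lessThan_iff mod_less_divisor)
  qed (auto simp: orb_def)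
  have orb_n: "orb = {..<n}" using allv orbU unfolding Uset_def by auto
  have injo: "inj_on pp {..<q}" using injq by (meson inj_onI lessThan_iff)
  have "card orb = q" unfolding orb_eq using card_image[OF injo] by simp
  then have qn: "q = n" using orb_n by simp
  have bij: "bij_betw pp {..<n} {..<n}" using injo orb_eq orb_n qn unfolding bij_betw_def by simp
  have arcs_eq: "arcs E = {(pp k, pp (Suc k mod n)) | k. k < n}"
  proof
    show "arcs E \<subseteq> {(pp k, pp (Suc k mod n)) | k. k < n}"
    proof
      fix e assume e: "e \<in> arcs E"
      obtain a b where ab: "e = (a,b)" by (cases e)
      obtain s where s: "(a,b,s) \<in> E" using e ab arcs_iff by blast
      have "a < n" using sd_lt[OF sd s] by simp
      then have "a \<in> pp ` {..<n}" using orb_n orb_eq qn by simp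
      then obtain k where k: "k < n" "a = pp k" by auto
      have "b = lam a" using outU orbU orb_n \<open>a < n\<close> e ab by blast
      then have "b = pp (Suc k)" using k by (simp add: pp_def)
      then have "b = pp (Suc k mod n)" using modq qn by metis
      then show "e \<in> {(pp k, pp (Suc k mod n)) | k. k < n}" using ab k by blast
    qed
    show "{(pp k, pp (Suc k mod n)) | k. k < n} \<subseteq> arcs E"
    proof
      fix e assume "e \<in> {(pp k, pp (Suc k mod n)) | k. k < n}"
      then obtain k where k: "e = (pp k, pp (Suc k mod n))" by blast
      have "pp (Suc k mod n) = pp (Suc k)" using modq qn by metis
      then show "e \<in> arcs E" using cyc0 k unfolding pp_def by (metis (no_types, lifting))
    qed
  qed
  have npar: "\<not> (\<exists>j i. (j,i,Pos) \<in> E \<and> (j,i,Neg) \<in> E)"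
  proof
    assume "\<exists>j i. (j,i,Pos) \<in> E \<and> (j,i,Neg) \<in> E"
    then obtain j i where ji: "(j,i,Pos) \<in> E" "(j,i,Neg) \<in> E" by blast
    have "i < n" using sd_lt[OF sd ji(1)] by simp
    then have "i \<in> ?U" using orb_n orbU by blast
    then show False using U_nopair ji unfolding pairE_def by blast
  qed
  show ?thesis unfolding signed_cycle_def using bij arcs_eq npar by blast
qed

lemma exists_lam:
  assumes n: "0 < n" and sd: "signed_digraph n E" and con: "connected_sd n E" and nc: "\<not> signed_cycle n E"
  shows "\<exists>lam. validlam n E lam \<and> (\<forall>v<n. reach n E lam v)"
proof -
  define lam0 where "lam0 u = (SOME v. \<exists>s. (u,v,s) \<in> E)" for u
  have val0: "validlam n E lam0" unfolding validlam_def lam0_def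
  proof (intro allI impI)
    fix u assume "\<exists>v s. (u, v, s) \<in> E"
    then show "\<exists>s. (u, SOME v. \<exists>s. (u, v, s) \<in> E, s) \<in> E" by (rule someI_ex)
  qed
  define P where "P k \<longleftrightarrow> (\<exists>lam. validlam n E lam \<and> card (Uset n E lam) = k)" for k
  have "P (card (Uset n E lam0))" unfolding P_def using val0 by blast
  then have "P (LEAST k. P k)" by (rule LeastI)
  then obtain lam where val: "validlam n E lam" and minc: "card (Uset n E lam) = (LEAST k. P k)"
    unfolding P_def by blast
  have min: "card (Uset n E lam) \<le> card (Uset n E lam')" if "validlam n E lam'" for lam'
    using Least_le[of P "card (Uset n E lam')"] that minc unfolding P_def by auto
  have "Uset n E lam = {}"
  proof (rule ccontr)
    assume "Uset n E lam \<noteq> {}"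
    then obtain u0 where u0: "u0 \<in> Uset n E lam" by blast
    show False
    proof (cases "\<exists>u x. u \<in> Uset n E lam \<and> (u,x) \<in> arcs E \<and> x \<noteq> lam u")
      case True
      then obtain u x where ux: "u \<in> Uset n E lam" "(u,x) \<in> arcs E" "x \<noteq> lam u" by blast
      obtain sx where sx: "(u,x,sx) \<in> E" using ux arcs_iff by blast
      have val': "validlam n E (lam(u:=x))" using val sx unfolding validlam_def by auto
      have "Uset n E (lam(u:=x)) \<subset> Uset n E lam" by (rule switch_reach[OF sd val ux])
      then have "card (Uset n E (lam(u:=x))) < card (Uset n E lam)"
        by (rule psubset_card_mono[rotated]) (simp add: Uset_def)
      with min[OF val'] show False by simp
    next
      case False
      then have "\<forall>u\<in>Uset n E lam. \<forall>x. (u,x) \<in> arcs E \<longrightarrow> x = lam u" by blast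
      then have "signed_cycle n E" using closed_cycle[OF n sd con u0] by blast
      then show False using nc by simp
    qed
  qed
  then show ?thesis using val unfolding Uset_def by blast
qed




lemma states_upd:
  assumes "x \<in> states n lo hi" "j < n" "lo j \<le> v" "v \<le> hi j"
  shows "x(j := v) \<in> states n lo hi"
  using assms unfolding states_def by auto

lemma sign_of_None: "sign_of d \<noteq> Some Pos \<Longrightarrow> sign_of d \<noteq> Some Neg \<Longrightarrow> d = 0"
  unfolding sign_of_def by (auto split: if_splits)

lemma dep_step:
  assumes noarc: "\<forall>s. (j,i,s) \<notin> interaction_graph n lo hi f"
  and i: "i < n" and j: "j < n" and x: "x \<in> states n lo hi"
  shows "lo j + int m \<le> hi j \<Longrightarrow> f (x(j := lo j + int m)) i = f (x(j := lo j)) i"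
proof (induction m)
  case 0 then show ?case by simp
next
  case (Suc m)
  let ?x = "x(j := lo j + int m)"
  have xs: "?x \<in> states n lo hi" using x Suc.prems j
    by (intro states_upd) (auto simp: states_def)
  have lt: "?x j < hi j" using Suc.prems by simp
  have "sign_of (f (?x(j := ?x j + 1)) i - f ?x i) \<noteq> Some s" for s
    using noarc xs lt i j unfolding interaction_graph_def by blast
  then have "f (?x(j := ?x j + 1)) i - f ?x i = 0" by (intro sign_of_None) auto
  moreover have "?x(j := ?x j + 1) = x(j := lo j + int (Suc m))" by auto
  ultimately have eq1: "f (x(j := lo j + int (Suc m))) i = f ?x i" by simp
  have "lo j + int m \<le> hi j" using Suc.prems by simp
  from trans[OF eq1 Suc.IH[OF this]] show ?case .
qed

lemma dep_upd:
  assumes noarc: "\<forall>s. (j,i,s) \<notin> interaction_graph n lo hi f"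
  and i: "i < n" and j: "j < n" and x: "x \<in> states n lo hi"
  and v: "lo j \<le> v" "v \<le> hi j"
  shows "f (x(j := v)) i = f x i"
proof -
  have x2: "x = x(j := lo j + int (nat (x j - lo j)))" using x j unfolding states_def by auto
  have "f (x(j := v)) i = f (x(j := lo j + int (nat (v - lo j)))) i" using v by simp
  also have "\<dots> = f (x(j := lo j)) i" using dep_step[OF noarc i j x, of "nat (v - lo j)"] v by simp
  also have "\<dots> = f (x(j := lo j + int (nat (x j - lo j)))) i"
    using dep_step[OF noarc i j x, of "nat (x j - lo j)"] x j unfolding states_def by auto
  also have "\<dots> = f x i" using x2 by simp
  finally show ?thesis .
qed

lemma dep_only:
  assumes noarc: "\<And>j. j < n \<Longrightarrow> j \<noteq> a \<Longrightarrow> (\<forall>s. (j,i,s) \<notin> interaction_graph n lo hi f)"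
  and i: "i < n"
  and x: "x \<in> states n lo hi" and y: "y \<in> states n lo hi" and xa: "x a = y a"
  shows "f x i = f y i"
proof -
  define z where "z m = (\<lambda>k. if k < m then y k else x k)" for m
  have "z m \<in> states n lo hi \<and> f (z m) i = f x i" for m
  proof (induction m)
    case 0 then show ?case using x by (simp add: z_def)
  next
    case (Suc m)
    have zs: "z (Suc m) = (z m)(m := y m)" by (auto simp: z_def)
    show ?case
    proof (cases "m = a \<or> n \<le> m")
      case True
      then have "z (Suc m) = z m" using zs xa x y unfolding z_def states_def by auto
      then show ?thesis using Suc by simp
    next
      case False
      then have mn: "m < n" "m \<noteq> a" by auto
      have yr: "lo m \<le> y m" "y m \<le> hi m" using y mn unfolding states_def by auto
      have zm: "z m \<in> states n lo hi" "f (z m) i = f x i" using Suc by auto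
      show ?thesis unfolding zs
      proof
        show "(z m)(m := y m) \<in> states n lo hi" by (rule states_upd[OF zm(1) mn(1) yr])
        show "f ((z m)(m := y m)) i = f x i" using dep_upd[OF noarc[OF mn] i mn(1) zm(1) yr] zm(2) by (rule trans)
      qed
    qed
  qed
  moreover have "z n = y" using x y unfolding z_def states_def by auto
  ultimately show ?thesis by metis
qed

lemma states_f:
  assumes "is_FDS n lo hi f" "x \<in> states n lo hi" shows "(f ^^ k) x \<in> states n lo hi"
  using assms by (induction k) (auto simp: is_FDS_def)

lemma cycle_no_nilpotent:
  assumes n: "0 < n" and cyc: "signed_cycle n E" and fds: "is_FDS n lo hi f"
  and IG: "interaction_graph n lo hi f = E" and db: "degree_bounded n lo hi f"
  shows "\<not> nilpotent n lo hi f"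
proof -
  obtain p where bij: "bij_betw p {..<n} {..<n}"
    and ar: "arcs E = {(p k, p (Suc k mod n)) | k. k < n}"
    and npar: "\<not> (\<exists>j i. (j,i,Pos) \<in> E \<and> (j,i,Neg) \<in> E)"
    using cyc unfolding signed_cycle_def by blast
  have pinj: "inj_on p {..<n}" and pim: "p ` {..<n} = {..<n}" using bij by (auto simp: bij_betw_def)
  define sc where "sc i = p (Suc (inv_into {..<n} p i) mod n)" for i
  have sm: "Suc k mod n = (if Suc k = n then 0 else Suc k)" if "k < n" for k
    using that by (simp add: mod_if)
  have modinj: "Suc k mod n = Suc k' mod n \<Longrightarrow> k < n \<Longrightarrow> k' < n \<Longrightarrow> k = k'" for k k'
    using sm[of k] sm[of k'] by (simp split: if_splits)
  have arcE: "(j, w) \<in> arcs E \<longleftrightarrow> (\<exists>s. (j,w,s) \<in> E)" for j w by (simp add: arcs_def)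
  have facts: "(\<forall>w s. (i,w,s) \<in> E \<longrightarrow> w = sc i) \<and> (\<exists>s. (i, sc i, s) \<in> E) \<and>
               (\<forall>j s. (j, sc i, s) \<in> E \<longrightarrow> j = i) \<and> sc i < n" if i: "i < n" for i
  proof -
    have "i \<in> p ` {..<n}" using pim i by simp
    then obtain k where k: "k < n" "p k = i" by auto
    have ik: "inv_into {..<n} p i = k" using inv_into_f_eq[OF pinj, of k i] k by simp
    have sci: "sc i = p (Suc k mod n)" by (simp add: sc_def ik)
    have 1: "w = sc i" if "(i,w,s) \<in> E" for w s
    proof -
      have "(i,w) \<in> arcs E" using that arcE by blast
      then obtain k' where "k' < n" "i = p k'" "w = p (Suc k' mod n)" using ar by auto
      then have "k' = k" using inj_onD[OF pinj, of k' k] k by simp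
      then show ?thesis using sci \<open>w = p (Suc k' mod n)\<close> by simp
    qed
    have 2: "\<exists>s. (i, sc i, s) \<in> E" using ar k sci arcE by blast
    have 3: "j = i" if "(j, sc i, s) \<in> E" for j s
    proof -
      have "(j, sc i) \<in> arcs E" using that arcE by blast
      then obtain k' where k': "k' < n" "j = p k'" "sc i = p (Suc k' mod n)" using ar by auto
      then have "Suc k' mod n = Suc k mod n" using sci inj_onD[OF pinj, of "Suc k' mod n" "Suc k mod n"] n
        by simp
      then have "k' = k" using modinj k'(1) k(1) by blast
      then show ?thesis using k k' by simp
    qed
    have "sc i < n" using sci pim n by auto
    then show ?thesis using 1 2 3 by blast
  qed
  have hilo: "hi i = lo i + 1" if i: "i < n" for i
  proof -
    from facts[OF i] obtain s where s: "(i, sc i, s) \<in> E" by blast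
    have "(i, sc i, s) \<in> interaction_graph n lo hi f" using s IG by simp
    then obtain x where x: "x \<in> states n lo hi" "x i < hi i"
      unfolding interaction_graph_def by auto
    have lx: "lo i \<le> x i" using x i unfolding states_def by auto
    have od: "out_degree E i = 1"
    proof (cases s)
      case Pos
      then have "{w. (i,w,Pos) \<in> E} = {sc i}" "{w. (i,w,Neg) \<in> E} = {}" using s facts[OF i] npar by blast+
      then show ?thesis by (simp add: out_degree_def)
    next
      case Neg
      then have "{w. (i,w,Pos) \<in> E} = {}" "{w. (i,w,Neg) \<in> E} = {sc i}" using s facts[OF i] npar by blast+
      then show ?thesis by (simp add: out_degree_def)
    qed
    have "card {lo i..hi i} \<le> 2" using db i od unfolding degree_bounded_def Let_def IG by auto
    then show ?thesis using x lx by auto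
  qed
  have inj: "x = y" if x: "x \<in> states n lo hi" and y: "y \<in> states n lo hi" and fxy: "f x = f y" for x y
  proof
    fix i
    show "x i = y i"
    proof (cases "i < n")
      case False then show ?thesis using x y unfolding states_def by auto
    next
      case i: True
      have key: False if a: "a \<in> states n lo hi" "b \<in> states n lo hi" "a i = lo i" "b i = lo i + 1"
         "f a = f b" for a b
      proof -
        from facts[OF i] obtain s where s: "(i, sc i, s) \<in> E" by blast
        have "(i, sc i, s) \<in> interaction_graph n lo hi f" using s IG by simp
        then obtain w where w: "w \<in> states n lo hi" "w i < hi i"
          "sign_of (f (w(i := w i + 1)) (sc i) - f w (sc i)) = Some s"
          unfolding interaction_graph_def by auto
        have wi: "w i = lo i" using w hilo[OF i] i unfolding states_def by force
        have ne: "f (w(i := w i + 1)) (sc i) \<noteq> f w (sc i)" using w(3) unfolding sign_of_def by auto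
        have noarc: "\<And>j. j < n \<Longrightarrow> j \<noteq> i \<Longrightarrow> (\<forall>s. (j, sc i, s) \<notin> interaction_graph n lo hi f)"
          unfolding IG using facts[OF i] by blast
        have w2: "w(i := w i + 1) \<in> states n lo hi" using w hilo[OF i] i
          by (intro states_upd) (auto simp: states_def)
        have scn: "sc i < n" using facts[OF i] by blast
        have e1: "a i = w i" using a(3) wi by simp
        have e2: "b i = (w(i := w i + 1)) i" using a(4) wi by simp
        have "f a (sc i) = f w (sc i)" by (rule dep_only[OF noarc scn a(1) w(1) e1])
        moreover have "f b (sc i) = f (w(i := w i + 1)) (sc i)"
          by (rule dep_only[OF noarc scn a(2) w2 e2])
        ultimately show False using ne a(5) by metis
      qed
      have "x i \<in> {lo i, lo i + 1}" "y i \<in> {lo i, lo i + 1}" using x y i hilo[OF i] unfolding states_def by force+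
      then show ?thesis using key[OF x y _ _ fxy] key[OF y x _ _ fxy[symmetric]] by auto
    qed
  qed
  have injk: "x = y" if "x \<in> states n lo hi" "y \<in> states n lo hi" "(f ^^ k) x = (f ^^ k) y" for k x y
    using that
  proof (induction k arbitrary: x y)
    case 0 then show ?case by simp
  next
    case (Suc k)
    have "(f ^^ k) (f x) = (f ^^ k) (f y)" using Suc.prems(3) unfolding funpow_Suc_right comp_def .
    then have "f x = f y" using Suc fds by (auto simp: is_FDS_def)
    then show ?case using inj Suc.prems by blast
  qed
  define x1 where "x1 = (\<lambda>j. if j < n then lo j else 0)"
  define x2 where "x2 = x1(0 := lo 0 + 1)"
  have x1s: "x1 \<in> states n lo hi" using hilo unfolding x1_def states_def by fastforce
  have x2s: "x2 \<in> states n lo hi" unfolding x2_def using x1s hilo[OF n] n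
    by (intro states_upd) (auto simp: x1_def)
  have "x2 0 \<noteq> x1 0" using n by (simp add: x2_def x1_def)
  then have "x1 \<noteq> x2" by auto
  then show ?thesis using injk x1s x2s unfolding nilpotent_def by metis
qed




lemma card_two:
  assumes "finite A" "v1 \<noteq> v2"
  shows "(if v1 \<in> A then 1 else 0) + (if v2 \<in> A then 1 else 0) \<le> card A"
proof -
  have "card ({v1,v2} \<inter> A) \<le> card A" using assms by (intro card_mono) auto
  moreover have "card ({v1,v2} \<inter> A) = (if v1 \<in> A then 1 else 0) + (if v2 \<in> A then 1 else 0)"
    using assms(2) by auto
  ultimately show ?thesis by simp
qed

lemma card_one:
  assumes "finite A"
  shows "(if v1 \<in> A then 1 else 0) \<le> card A"
  using assms card_mono[of A "{v1}"] by auto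

locale constr =
  fixes n :: nat and E :: "(nat \<times> nat \<times> sign) set" and lam :: "nat \<Rightarrow> nat"
  assumes sd: "signed_digraph n E" and val: "validlam n E lam" and allr: "\<forall>v<n. reach n E lam v"
begin

definition rank :: "nat \<Rightarrow> nat" where "rank v = (LEAST k. v \<in> Rset n E lam k)"
definition par :: "nat \<Rightarrow> nat" where
  "par v = (SOME u. u \<in> Rset n E lam (rank v - 1) \<and> (u,v) \<in> arcs E)"
definition rootor :: "nat \<Rightarrow> bool" where
  "rootor v \<longleftrightarrow> (\<exists>u. (u,v,Neg) \<in> E \<and> lam u \<noteq> v) \<and> \<not> (\<exists>u. (u,v,Pos) \<in> E \<and> lam u \<noteq> v) \<and> \<not> (\<exists>u. pairE E u v)"

primrec tv :: "nat \<Rightarrow> nat \<Rightarrow> bool" where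
  "tv 0 v = rootor v"
| "tv (Suc k) v = (if rank v = Suc k then (tv k (par v) = ((par v, v, Pos) \<in> E)) else tv k v)"

definition isor :: "nat \<Rightarrow> bool" where "isor v = tv (rank v) v"
definition tt :: "nat \<Rightarrow> nat" where "tt u = (if pairE E u (lam u) then 2 else 1)"
definition mm :: "nat \<Rightarrow> nat" where
  "mm u = (if out_degree E u = 0 then (if in_degree E u = 0 then 0 else 1) else out_degree E u)"
definition pos :: "nat \<Rightarrow> nat \<Rightarrow> sign \<Rightarrow> nat" where
  "pos u v s = (if pairE E u v then (if (s = Pos) = (\<not> isor v) then 1 else 2) else 1)"
definition th :: "nat \<Rightarrow> nat \<Rightarrow> sign \<Rightarrow> nat" where
  "th u v s = (if v = lam u then 0 else tt u) + pos u v s"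
definition litv :: "int \<Rightarrow> nat \<Rightarrow> nat \<Rightarrow> sign \<Rightarrow> bool" where
  "litv k u v s \<longleftrightarrow> ((k \<ge> int (th u v s)) = (s = Pos))"
definition FF :: "(nat \<Rightarrow> int) \<Rightarrow> nat \<Rightarrow> bool" where
  "FF x v \<longleftrightarrow> (if isor v then (\<exists>u s. (u,v,s) \<in> E \<and> litv (x u) u v s)
                 else (\<forall>u s. (u,v,s) \<in> E \<longrightarrow> litv (x u) u v s))"
definition ff :: "(nat \<Rightarrow> int) \<Rightarrow> nat \<Rightarrow> int" where
  "ff x = (\<lambda>v. if v < n \<and> (\<exists>u s. (u,v,s) \<in> E) \<and> FF x v then int (tt v) else 0)"
definition hi :: "nat \<Rightarrow> int" where "hi u = int (mm u)"
definition zz :: "nat \<Rightarrow> int" where "zz v = (if v < n \<and> isor v then int (tt v) else 0)"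

lemma finE: "finite E"
proof -
  have "E \<subseteq> {..<n} \<times> {..<n} \<times> UNIV" using sd unfolding signed_digraph_def by auto
  moreover have "finite (UNIV :: sign set)"
  proof -
    have u: "(UNIV :: sign set) = {Pos, Neg}" using sign.exhaust by auto
    show ?thesis by (simp only: u finite_insert finite.emptyI)
  qed
  ultimately show ?thesis by (meson finite_SigmaI finite_lessThan finite_subset)
qed

lemma fin_out: "finite {w. (u,w,s) \<in> E}"
proof -
  have "{w. (u,w,s) \<in> E} \<subseteq> {..<n}" using sd unfolding signed_digraph_def by auto
  then show ?thesis using finite_subset by blast
qed

lemma fin_in: "finite {w. (w,u,s) \<in> E}"
proof -
  have "{w. (w,u,s) \<in> E} \<subseteq> {..<n}" using sd unfolding signed_digraph_def by auto
  then show ?thesis using finite_subset by blast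
qed

lemma tt_ge: "1 \<le> tt u" "tt u \<le> 2" unfolding tt_def by auto

lemma arc_lam: assumes "(u,v,s) \<in> E" shows "\<exists>s'. (u, lam u, s') \<in> E"
proof -
  have "u < n" using sd_lt[OF sd assms] by simp
  moreover have "\<exists>v s. (u,v,s) \<in> E" using assms by blast
  ultimately show ?thesis using val unfolding validlam_def by blast
qed

lemma out_pos: assumes "(u,v,s) \<in> E" shows "out_degree E u > 0"
proof (cases s)
  case Pos
  then have "v \<in> {w. (u,w,Pos) \<in> E}" using assms by simp
  then have "card {w. (u,w,Pos) \<in> E} > 0" using fin_out card_gt_0_iff by blast
  then show ?thesis unfolding out_degree_def by simp
next
  case Neg
  then have "v \<in> {w. (u,w,Neg) \<in> E}" using assms by simp
  then have "card {w. (u,w,Neg) \<in> E} > 0" using fin_out card_gt_0_iff by blast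
  then show ?thesis unfolding out_degree_def by simp
qed

lemma th_bounds:
  assumes a: "(u,v,s) \<in> E"
  shows "1 \<le> th u v s" "th u v s \<le> out_degree E u" "th u v s \<le> mm u"
proof -
  show "1 \<le> th u v s" unfolding th_def pos_def by auto
  let ?P = "{w. (u,w,Pos) \<in> E}" and ?N = "{w. (u,w,Neg) \<in> E}"
  have od: "out_degree E u = card ?P + card ?N" unfolding out_degree_def by simp
  have posle: "pos u v s \<le> (if v \<in> ?P then 1 else 0) + (if v \<in> ?N then 1 else 0)"
    using a unfolding pos_def pairE_def by (cases s) auto
  obtain s' where s': "(u, lam u, s') \<in> E" using arc_lam[OF a] by blast
  have ttle: "tt u \<le> (if lam u \<in> ?P then 1 else 0) + (if lam u \<in> ?N then 1 else 0)"
    using s' unfolding tt_def pairE_def by (cases s') auto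
  show "th u v s \<le> out_degree E u"
  proof (cases "v = lam u")
    case True
    then have "th u v s = pos u v s" unfolding th_def by simp
    moreover have "(if v \<in> ?P then 1 else 0) \<le> card ?P" "(if v \<in> ?N then 1 else 0) \<le> card ?N"
      using card_one[OF fin_out] by blast+
    ultimately show ?thesis using posle od by linarith
  next
    case False
    then have "th u v s = tt u + pos u v s" unfolding th_def by simp
    moreover have "(if lam u \<in> ?P then 1 else 0) + (if v \<in> ?P then 1 else 0) \<le> card ?P"
      using card_two[OF fin_out] False by metis
    moreover have "(if lam u \<in> ?N then 1 else 0) + (if v \<in> ?N then 1 else 0) \<le> card ?N"
      using card_two[OF fin_out] False by metis
    ultimately show ?thesis using posle ttle od by linarith
  qed
  then show "th u v s \<le> mm u" using out_pos[OF a] unfolding mm_def by simp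
qed

lemma tt_le_mm:
  assumes "(w,v,s) \<in> E" shows "tt v \<le> mm v"
proof (cases "out_degree E v = 0")
  case True
  have "\<not> pairE E v (lam v)" using True out_pos[of v "lam v" Pos] unfolding pairE_def by auto
  then have "tt v = 1" unfolding tt_def by simp
  have "in_degree E v > 0"
  proof (cases s)
    case Pos
    then have "w \<in> in_pos E v" using assms unfolding in_pos_def by simp
    then show ?thesis using fin_in card_gt_0_iff unfolding in_degree_def in_pos_def by fastforce
  next
    case Neg
    then have "w \<in> in_neg E v" using assms unfolding in_neg_def by simp
    then show ?thesis using fin_in card_gt_0_iff unfolding in_degree_def in_neg_def by fastforce
  qed
  then show ?thesis using True \<open>tt v = 1\<close> unfolding mm_def by simp
next
  case False
  show ?thesis
  proof (cases "pairE E v (lam v)")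
    case True
    then have "(v, lam v, Pos) \<in> E" "(v, lam v, Neg) \<in> E" unfolding pairE_def by auto
    then have "th v (lam v) Pos \<noteq> th v (lam v) Neg" unfolding th_def pos_def pairE_def by auto
    then have "2 \<le> out_degree E v" using th_bounds[OF \<open>(v, lam v, Pos) \<in> E\<close>] th_bounds[OF \<open>(v, lam v, Neg) \<in> E\<close>]
      by linarith
    then show ?thesis using False True unfolding mm_def tt_def by simp
  next
    case False2: False
    then show ?thesis using False unfolding mm_def tt_def by simp
  qed
qed

lemma ff_range: "ff x v = 0 \<or> ff x v = int (tt v)" unfolding ff_def by auto

lemma ff_states: "ff x \<in> states n (\<lambda>_. 0) hi"
  unfolding states_def hi_def
proof (intro CollectI conjI allI impI)
  fix i assume "i < n"
  show "0 \<le> ff x i" unfolding ff_def by simp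
  show "ff x i \<le> int (mm i)"
    using tt_le_mm unfolding ff_def by auto
next
  fix i :: nat assume "n \<le> i" then show "ff x i = 0" unfolding ff_def by simp
qed

end



context constr begin

lemma FF_mono:
  assumes "\<And>w s. (w,v,s) \<in> E \<Longrightarrow> litv (x w) w v s \<Longrightarrow> litv (y w) w v s"
  shows "FF x v \<Longrightarrow> FF y v"
  using assms unfolding FF_def by (auto split: if_splits)

lemma ff_mono:
  assumes "\<And>w s. (w,v,s) \<in> E \<Longrightarrow> litv (x w) w v s \<Longrightarrow> litv (y w) w v s"
  shows "ff x v \<le> ff y v"
  using FF_mono[of v x y, OF assms] unfolding ff_def by auto

lemma lit_shift_pos:
  "litv k u v Pos \<Longrightarrow> litv (k + 1) u v Pos" unfolding litv_def by auto

lemma lit_shift_neg: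
  "litv (k + 1) u v Neg \<Longrightarrow> litv k u v Neg" unfolding litv_def by auto

lemma IG_sub: "interaction_graph n (\<lambda>_. 0) hi ff \<subseteq> E"
proof
  fix a assume a: "a \<in> interaction_graph n (\<lambda>_. 0) hi ff"
  obtain u v s where uvs: "a = (u,v,s)" by (cases a)
  from a uvs obtain x where x: "u < n" "v < n" "x \<in> states n (\<lambda>_. 0) hi" "x u < hi u"
    "sign_of (ff (x(u := x u + 1)) v - ff x v) = Some s"
    unfolding interaction_graph_def by blast
  let ?x' = "x(u := x u + 1)"
  show "a \<in> E"
  proof (rule ccontr)
    assume nE: "a \<notin> E"
    show False
    proof (cases s)
      case Pos
      have "litv (?x' w) w v s' \<Longrightarrow> litv (x w) w v s'" if w: "(w,v,s') \<in> E" for w s'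
      proof (cases "w = u")
        case True
        then have "s' = Neg" using nE uvs Pos w by (cases s') auto
        then show "litv (?x' w) w v s' \<Longrightarrow> litv (x w) w v s'" using True lit_shift_neg by simp
      qed simp
      then have "ff ?x' v \<le> ff x v" by (rule ff_mono)
      then show False using x(5) Pos unfolding sign_of_def by (auto split: if_splits)
    next
      case Neg
      have "litv (x w) w v s' \<Longrightarrow> litv (?x' w) w v s'" if w: "(w,v,s') \<in> E" for w s'
      proof (cases "w = u")
        case True
        then have "s' = Pos" using nE uvs Neg w by (cases s') auto
        then show "litv (x w) w v s' \<Longrightarrow> litv (?x' w) w v s'" using True lit_shift_pos by simp
      qed simp
      then have "ff x v \<le> ff ?x' v" by (rule ff_mono)
      then show False using x(5) Neg unfolding sign_of_def by (auto split: if_splits)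
    qed
  qed
qed

lemma good_exists:
  assumes w: "w < n"
  shows "\<exists>k. 0 \<le> k \<and> k \<le> int (mm w) \<and> (\<forall>s'. (w,v,s') \<in> E \<longrightarrow> litv k w v s' = (\<not> isor v))"
proof (cases "pairE E w v")
  case True
  then have P: "(w,v,Pos) \<in> E" and N: "(w,v,Neg) \<in> E" unfolding pairE_def by auto
  have hP: "th w v Pos \<le> mm w" and hN: "th w v Neg \<le> mm w" using th_bounds P N by auto
  show ?thesis
  proof (cases "isor v")
    case False
    have eq: "th w v Neg = th w v Pos + 1" using True False unfolding th_def pos_def by auto
    show ?thesis
    proof (intro exI conjI allI impI)
      show "0 \<le> int (th w v Pos)" by simp
      show "int (th w v Pos) \<le> int (mm w)" using hP by simp
      fix s' show "litv (int (th w v Pos)) w v s' = (\<not> isor v)"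
        using False eq unfolding litv_def by (cases s') auto
    qed
  next
    case True2: True
    have eq: "th w v Pos = th w v Neg + 1" using True True2 unfolding th_def pos_def by auto
    show ?thesis
    proof (intro exI conjI allI impI)
      show "0 \<le> int (th w v Neg)" by simp
      show "int (th w v Neg) \<le> int (mm w)" using hN by simp
      fix s' show "litv (int (th w v Neg)) w v s' = (\<not> isor v)"
        using True2 eq unfolding litv_def by (cases s') auto
    qed
  qed
next
  case False
  have one: "\<And>s'. (w,v,s') \<in> E \<Longrightarrow> 1 \<le> th w v s' \<and> th w v s' \<le> mm w" using th_bounds by blast
  show ?thesis
  proof (cases "(\<exists>s'. (w,v,s') \<in> E)")
    case False2: False
    then show ?thesis by (intro exI[of _ 0]) simp
  next
    case True
    then obtain s0 where s0: "(w,v,s0) \<in> E" by blast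
    have only: "(w,v,s') \<in> E \<Longrightarrow> s' = s0" for s' using False s0 unfolding pairE_def by (cases s'; cases s0) auto
    have b: "1 \<le> th w v s0" "th w v s0 \<le> mm w" using one[OF s0] by auto
    let ?k = "if (s0 = Pos) = (\<not> isor v) then int (mm w) else 0"
    show ?thesis
    proof (intro exI[of _ ?k] conjI allI impI)
      show "0 \<le> ?k" by simp
      show "?k \<le> int (mm w)" by simp
      fix s' assume "(w,v,s') \<in> E"
      then have "s' = s0" by (rule only)
      then show "litv ?k w v s' = (\<not> isor v)" using b unfolding litv_def by (cases s0) auto
    qed
  qed
qed

lemma FF_eval:
  assumes a: "(u,v,s) \<in> E"
  and oth: "\<And>w s'. (w,v,s') \<in> E \<Longrightarrow> (w,s') \<noteq> (u,s) \<Longrightarrow> litv (y w) w v s' = (\<not> isor v)"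
  shows "FF y v = litv (y u) u v s"
proof (cases "isor v")
  case True
  have "(\<exists>w s'. (w,v,s') \<in> E \<and> litv (y w) w v s') \<longleftrightarrow> litv (y u) u v s"
  proof
    assume "\<exists>w s'. (w,v,s') \<in> E \<and> litv (y w) w v s'"
    then obtain w s' where ws: "(w,v,s') \<in> E" "litv (y w) w v s'" by blast
    show "litv (y u) u v s"
    proof (cases "(w,s') = (u,s)")
      case True then show ?thesis using ws by simp
    next
      case False then have "litv (y w) w v s' = False" using oth[OF ws(1)] \<open>isor v\<close> by simp
      then show ?thesis using ws by simp
    qed
  next
    assume "litv (y u) u v s" then show "\<exists>w s'. (w,v,s') \<in> E \<and> litv (y w) w v s'" using a by blast
  qed
  then show ?thesis unfolding FF_def using True by simp
next
  case False
  have "(\<forall>w s'. (w,v,s') \<in> E \<longrightarrow> litv (y w) w v s') \<longleftrightarrow> litv (y u) u v s"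
  proof
    assume "\<forall>w s'. (w,v,s') \<in> E \<longrightarrow> litv (y w) w v s'"
    then show "litv (y u) u v s" using a by blast
  next
    assume l: "litv (y u) u v s"
    show "\<forall>w s'. (w,v,s') \<in> E \<longrightarrow> litv (y w) w v s'"
    proof (intro allI impI)
      fix w s' assume ws: "(w,v,s') \<in> E"
      show "litv (y w) w v s'"
      proof (cases "(w,s') = (u,s)")
        case True then show ?thesis using l by simp
      next
        case False then show ?thesis using oth[OF ws] \<open>\<not> isor v\<close> by simp
      qed
    qed
  qed
  then show ?thesis unfolding FF_def using False by simp
qed

lemma IG_sup: "E \<subseteq> interaction_graph n (\<lambda>_. 0) hi ff"
proof
  fix a assume aE: "a \<in> E"
  obtain u v s where uvs: "a = (u,v,s)" by (cases a)
  have a: "(u,v,s) \<in> E" using aE uvs by simp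
  have un: "u < n" and vn: "v < n" using sd_lt[OF sd a] by auto
  define c where "c = (\<not> isor v)"
  define g where "g w = (SOME k. 0 \<le> k \<and> k \<le> int (mm w) \<and> (\<forall>s'. (w,v,s') \<in> E \<longrightarrow> litv k w v s' = c))" for w
  have g: "0 \<le> g w \<and> g w \<le> int (mm w) \<and> (\<forall>s'. (w,v,s') \<in> E \<longrightarrow> litv (g w) w v s' = c)" if "w < n" for w
    unfolding g_def c_def by (rule someI_ex[OF good_exists[OF that]])
  have tb: "1 \<le> th u v s" "th u v s \<le> mm u" using th_bounds[OF a] by auto
  define x where "x w = (if w = u then int (th u v s) - 1 else if w < n then g w else 0)" for w
  have xs: "x \<in> states n (\<lambda>_. 0) hi" unfolding states_def hi_def x_def using g tb un by auto
  have xu: "x u < hi u" unfolding x_def hi_def using tb by simp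
  define x' where "x' = x(u := x u + 1)"
  have x'u: "x' u = int (th u v s)" unfolding x'_def x_def by simp
  have xu2: "x u = int (th u v s) - 1" unfolding x_def by simp
  have partner: "litv (x u) u v s' = c \<and> litv (x' u) u v s' = c" if "(u,v,s') \<in> E" "s' \<noteq> s" for s'
  proof -
    have pr: "pairE E u v" using that a unfolding pairE_def by (cases s; cases s') auto
    show ?thesis
    proof (cases "isor v")
      case True
      then show ?thesis using pr that x'u xu2 unfolding c_def litv_def th_def pos_def
        by (cases s; cases s') auto
    next
      case False
      then show ?thesis using pr that x'u xu2 unfolding c_def litv_def th_def pos_def
        by (cases s; cases s') auto
    qed
  qed
  have oth: "litv (x w) w v s' = c \<and> litv (x' w) w v s' = c" if "(w,v,s') \<in> E" "(w,s') \<noteq> (u,s)" for w s'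
  proof (cases "w = u")
    case True
    then show ?thesis using partner that by auto
  next
    case False
    have wn: "w < n" using sd_lt[OF sd that(1)] by simp
    have "x' w = x w" "x w = g w" unfolding x'_def x_def using False wn by auto
    then show ?thesis using g[OF wn] that(1) by simp
  qed
  have F1: "FF x v = litv (x u) u v s" by (rule FF_eval[OF a]) (use oth c_def in blast)
  have F2: "FF x' v = litv (x' u) u v s" by (rule FF_eval[OF a]) (use oth c_def in blast)
  have l1: "litv (x u) u v s = (s = Neg)" using xu2 unfolding litv_def by (cases s) auto
  have l2: "litv (x' u) u v s = (s = Pos)" using x'u unfolding litv_def by (cases s) auto
  have ex: "\<exists>u s. (u,v,s) \<in> E" using a by blast
  have e1: "ff x v = (if s = Neg then int (tt v) else 0)" unfolding ff_def using F1 l1 vn ex by simp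
  have e2: "ff x' v = (if s = Pos then int (tt v) else 0)" unfolding ff_def using F2 l2 vn ex by simp
  have "sign_of (ff x' v - ff x v) = Some s" using e1 e2 tt_ge(1)[of v] unfolding sign_of_def by (cases s) auto
  then show "a \<in> interaction_graph n (\<lambda>_. 0) hi ff"
    unfolding interaction_graph_def uvs using un vn xs xu x'_def by blast
qed

lemma IG_eq: "interaction_graph n (\<lambda>_. 0) hi ff = E" using IG_sub IG_sup by blast

end



context constr begin

lemma Rset_mono: "k \<le> k' \<Longrightarrow> Rset n E lam k \<subseteq> Rset n E lam k'"
proof (induction k' rule: dec_induct)
  case base then show ?case by simp
next
  case (step m) then show ?case by auto
qed

lemma rank_in: "v < n \<Longrightarrow> v \<in> Rset n E lam (rank v)"
  unfolding rank_def using allr unfolding reach_def by (meson LeastI_ex)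

lemma rank_le: "v \<in> Rset n E lam k \<Longrightarrow> rank v \<le> k"
  unfolding rank_def by (rule Least_le)

lemma rank0: "v < n \<Longrightarrow> rank v = 0 \<longleftrightarrow> root E lam v"
proof
  assume "v < n" "rank v = 0"
  then show "root E lam v" using rank_in[of v] by simp
next
  assume "v < n" "root E lam v"
  then have "v \<in> Rset n E lam 0" by simp
  then show "rank v = 0" using rank_le by fastforce
qed

lemma par_prop:
  assumes vn: "v < n" and rk: "rank v = Suc r"
  shows "par v \<in> Rset n E lam r \<and> (par v, v) \<in> arcs E \<and> rank (par v) \<le> r"
proof -
  have "v \<in> Rset n E lam (Suc r)" using rank_in[OF vn] rk by simp
  moreover have "v \<notin> Rset n E lam r" using rank_le rk by fastforce
  ultimately have "\<exists>u. u \<in> Rset n E lam r \<and> (u,v) \<in> arcs E" by auto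
  then have "par v \<in> Rset n E lam r \<and> (par v, v) \<in> arcs E"
    unfolding par_def using rk someI_ex[of "\<lambda>u. u \<in> Rset n E lam r \<and> (u,v) \<in> arcs E"] by simp
  then show ?thesis using rank_le by blast
qed

lemma tv_stable: "rank w \<le> k \<Longrightarrow> tv k w = tv (rank w) w"
proof (induction k)
  case 0 then show ?case by simp
next
  case (Suc k)
  show ?case
  proof (cases "rank w = Suc k")
    case True then show ?thesis by simp
  next
    case False
    then have "rank w \<le> k" using Suc.prems by simp
    then show ?thesis using Suc.IH False by simp
  qed
qed

lemma isor_par:
  assumes vn: "v < n" and rk: "rank v = Suc r"
  shows "isor v = (isor (par v) = ((par v, v, Pos) \<in> E))"
proof -
  have "rank (par v) \<le> r" using par_prop[OF vn rk] by blast
  then have "tv r (par v) = isor (par v)" unfolding isor_def by (rule tv_stable)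
  then show ?thesis unfolding isor_def using rk by simp
qed

lemma isor_root: "rank v = 0 \<Longrightarrow> isor v = rootor v"
  unfolding isor_def by simp

lemma ff_le_tt: "ff x w \<le> int (tt w)" "0 \<le> ff x w" unfolding ff_def by auto

lemma dead_bit:
  assumes "lam u \<noteq> v"
  shows "\<not> (ff x u \<ge> int (th u v s))"
proof -
  have "th u v s \<ge> tt u + 1" unfolding th_def pos_def using assms by auto
  then show ?thesis using ff_le_tt(1)[of x u] by linarith
qed

lemma root_settle:
  assumes vn: "v < n" and r: "root E lam v"
  shows "ff (ff x) v = zz v"
proof -
  let ?y = "ff x"
  have iso: "isor v = rootor v" using rank0[OF vn] r isor_root by blast
  show ?thesis
  proof (cases "\<exists>u s. (u,v,s) \<in> E")
    case False
    then have "\<not> rootor v" unfolding rootor_def by blast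
    then show ?thesis using False iso unfolding ff_def zz_def by simp
  next
    case ex: True
    show ?thesis
    proof (cases "\<exists>u. pairE E u v")
      case True
      then obtain u where pr: "pairE E u v" by blast
      have nro: "\<not> rootor v" using pr unfolding rootor_def by blast
      have "\<exists>s. (u,v,s) \<in> E \<and> \<not> litv (?y u) u v s"
      proof (cases "lam u = v")
        case False
        then show ?thesis using pr dead_bit[OF False, where x=x and s=Pos] unfolding pairE_def litv_def by auto
      next
        case True
        have tt2: "tt u = 2" using pr True unfolding tt_def by simp
        have thP: "th u v Pos = 1" and thN: "th u v Neg = 2"
          using True pr nro iso unfolding th_def pos_def by auto
        have "?y u = 0 \<or> ?y u = 2" using ff_range[of x u] tt2 by simp
        then show ?thesis using pr thP thN unfolding pairE_def litv_def by auto
      qed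
      then have "\<not> FF ?y v" using nro iso unfolding FF_def by auto
      then show ?thesis using nro iso unfolding ff_def zz_def by simp
    next
      case npr: False
      then obtain u s where us: "(u,v,s) \<in> E" "lam u \<noteq> v" using r ex unfolding root_def by blast
      show ?thesis
      proof (cases "\<exists>u. (u,v,Pos) \<in> E \<and> lam u \<noteq> v")
        case True
        then obtain u' where u': "(u',v,Pos) \<in> E" "lam u' \<noteq> v" by blast
        have nro: "\<not> rootor v" using True unfolding rootor_def by blast
        have "\<not> litv (?y u') u' v Pos" using dead_bit[OF u'(2)] unfolding litv_def by simp
        then have "\<not> FF ?y v" using nro iso u'(1) unfolding FF_def by auto
        then show ?thesis using nro iso unfolding ff_def zz_def by simp
      next
        case False
        then have sN: "s = Neg" using us by (cases s) auto
        have ro: "rootor v" using False npr us sN unfolding rootor_def by blast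
        have "litv (?y u) u v Neg" using dead_bit[OF us(2)] unfolding litv_def by simp
        then have "FF ?y v" using ro iso us(1) sN unfolding FF_def by auto
        then show ?thesis using ro iso vn ex unfolding ff_def zz_def by simp
      qed
    qed
  qed
qed

lemma canal:
  assumes vn: "v < n" and nr: "\<not> root E lam v" and rk: "rank v = Suc r"
  and yu: "y (par v) = zz (par v)"
  shows "ff y v = zz v"
proof -
  let ?u = "par v"
  have pp: "(?u, v) \<in> arcs E" using par_prop[OF vn rk] by blast
  then obtain s where s: "(?u,v,s) \<in> E" using arcs_iff by blast
  have lu: "lam ?u = v" using nr s unfolding root_def by blast
  have npr: "\<not> pairE E ?u v" using nr unfolding root_def by blast
  have sP: "((?u,v,Pos) \<in> E) = (s = Pos)" using s npr unfolding pairE_def by (cases s) auto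
  have th1: "th ?u v s = 1" using lu npr unfolding th_def pos_def by simp
  have un: "?u < n" using sd_lt[OF sd s] by simp
  have bit: "(y ?u \<ge> int (th ?u v s)) = isor ?u" using yu th1 un tt_ge(1)[of ?u] unfolding zz_def by auto
  have lit: "litv (y ?u) ?u v s = isor v" using bit isor_par[OF vn rk] sP unfolding litv_def by simp
  have ex: "\<exists>u s. (u,v,s) \<in> E" using s by blast
  show ?thesis
  proof (cases "isor v")
    case True
    then have "FF y v" using lit s unfolding FF_def by auto
    then show ?thesis using True vn ex unfolding ff_def zz_def by simp
  next
    case False
    then have "\<not> FF y v" using lit s unfolding FF_def by auto
    then show ?thesis using False unfolding ff_def zz_def by simp
  qed
qed

lemma settle: "\<forall>v<n. rank v \<le> k \<longrightarrow> (\<forall>x. (ff ^^ (k + 2)) x v = zz v)"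
proof (induction k)
  case 0
  show ?case
  proof (intro allI impI)
    fix v x assume vn: "v < n" and "rank v \<le> 0"
    then have "root E lam v" using rank0 by simp
    then show "(ff ^^ (0 + 2)) x v = zz v" using root_settle[OF vn] by (simp add: numeral_2_eq_2)
  qed
next
  case (Suc k)
  show ?case
  proof (intro allI impI)
    fix v x assume vn: "v < n" and rk: "rank v \<le> Suc k"
    show "(ff ^^ (Suc k + 2)) x v = zz v"
    proof (cases "rank v \<le> k")
      case True
      have "(ff ^^ (Suc k + 2)) x = (ff ^^ (k + 2)) (ff x)"
        by (simp only: add_Suc funpow_Suc_right o_apply)
      then show ?thesis using Suc.IH vn True by simp
    next
      case False
      then have rk2: "rank v = Suc k" using rk by simp
      then have nr: "\<not> root E lam v" using rank0[OF vn] by simp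
      have pn: "par v < n" and prk: "rank (par v) \<le> k"
        using par_prop[OF vn rk2] sd_lt[OF sd] arcs_iff by blast+
      have "(ff ^^ (Suc k + 2)) x = ff ((ff ^^ (k + 2)) x)" by simp
      moreover have "((ff ^^ (k + 2)) x) (par v) = zz (par v)" using Suc.IH pn prk by blast
      ultimately show ?thesis using canal[OF vn nr rk2] by simp
    qed
  qed
qed

lemma nilp: "nilpotent n (\<lambda>_. 0) hi ff"
proof -
  define K where "K = Max (rank ` {..<n}) + 2"
  have allK: "(ff ^^ K) x = zz" for x
  proof
    fix v
    show "(ff ^^ K) x v = zz v"
    proof (cases "v < n")
      case True
      then have "rank v \<le> Max (rank ` {..<n})" by simp
      then show ?thesis using settle True unfolding K_def by blast
    next
      case False
      have "(ff ^^ K) x = ff ((ff ^^ (K - 1)) x)" unfolding K_def by simp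
      then show ?thesis using False unfolding ff_def zz_def by simp
    qed
  qed
  show ?thesis unfolding nilpotent_def
  proof (intro exI conjI)
    show "0 < K" unfolding K_def by simp
    show "\<forall>x\<in>states n (\<lambda>_. 0) hi. (ff ^^ K) x = zz" using allK by blast
  qed
qed

lemma fds: "is_FDS n (\<lambda>_. 0) hi ff"
  unfolding is_FDS_def using ff_states by (simp add: hi_def)

lemma dbound: "degree_bounded n (\<lambda>_. 0) hi ff"
  unfolding degree_bounded_def Let_def IG_eq
proof (intro allI impI)
  fix i assume "i < n"
  have c: "card {0..hi i} = mm i + 1" unfolding hi_def by simp
  show "if out_degree E i = 0 \<and> 0 < in_degree E i then card {0..hi i} = 2
        else card {0..hi i} \<le> out_degree E i + 1"
    unfolding c mm_def by auto
qed

end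

theorem construct:
  assumes n: "0 < n" and sd: "signed_digraph n E" and con: "connected_sd n E" and nc: "\<not> signed_cycle n E"
  shows "\<exists>lo hi f. is_FDS n lo hi f \<and> interaction_graph n lo hi f = E \<and>
                   nilpotent n lo hi f \<and> degree_bounded n lo hi f"
proof -
  obtain lam where "validlam n E lam" "\<forall>v<n. reach n E lam v" using exists_lam[OF n sd con nc] by blast
  then interpret constr n E lam using sd by unfold_locales auto
  show ?thesis using fds IG_eq nilp dbound by blast
qed


theorem corollary4:
  fixes n :: nat and E :: "(nat \<times> nat \<times> sign) set"
  assumes "0 < n" and "signed_digraph n E" and "connected_sd n E"
  shows "(\<exists>lo hi f. is_FDS n lo hi f \<and> interaction_graph n lo hi f = E \<and>
                   nilpotent n lo hi f \<and> degree_bounded n lo hi f)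
         \<longleftrightarrow> \<not> signed_cycle n E"
proof
  assume "\<exists>lo hi f. is_FDS n lo hi f \<and> interaction_graph n lo hi f = E \<and>
                   nilpotent n lo hi f \<and> degree_bounded n lo hi f"
  then obtain lo hi f where f: "is_FDS n lo hi f" "interaction_graph n lo hi f = E"
    "nilpotent n lo hi f" "degree_bounded n lo hi f" by blast
  show "\<not> signed_cycle n E"
  proof
    assume "signed_cycle n E"
    then show False using cycle_no_nilpotent[OF assms(1) _ f(1) f(2) f(4)] f(3) by blast
  qed
next
  assume "\<not> signed_cycle n E"
  then show "\<exists>lo hi f. is_FDS n lo hi f \<and> interaction_graph n lo hi f = E \<and>
                   nilpotent n lo hi f \<and> degree_bounded n lo hi f"
    using construct assms by blast
qed

end
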